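(* Let $h$ be a meromorphic function on $\mathfrak{H}$ and let $\Gamma$ be a finite index subgroup of $\mathrm{SL}_2(\mathbb{Z})$. Then $h$ is $\rho$-equivariant for some triangular representation $\rho$ of $\Gamma$ if and only if the derivative $h'$ is a meromorphic weight $2$ modular form with a character of $\Gamma$.
   Context: $\mathfrak{H}$ is the complex upper half-plane. For a matrix $\begin{pmatrix}a&b\\c&d\end{pmatrix}$ and $z\in\mathbb{C}$, write $\begin{pmatrix}a&b\\c&d\end{pmatrix}\cdot z=\frac{az+b}{cz+d}$. Given a representation $\rho:\Gamma\to\mathrm{GL}_2(\mathbb{C})$, a meromorphic function $h$ on $\mathfrak{H}$ is $\rho$-equivariant for $\Gamma$ if $h(\gamma\tau)=\rho(\gamma)\cdot h(\tau)$ for all $\gamma\in\Gamma,\tau\in\mathfrak{H}$ (linear fractional action on both sides); $\rho$ is triangular if all $\rho(\gamma)$ are upper triangular. A meromorphic weight $2$ modular form with a character $\chi$ of $\Gamma$ (a homomorphism $\chi:\Gamma\to\mathbb{C}^\times$) is a meromorphic function $g$ on $\mathfrak{H}$ with $g(\gamma\tau)=\chi(\gamma)(c\tau+d)^2g(\tau)$ for all $\gamma=\begin{pmatrix}a&b\\c&d\end{pmatrix}\in\Gamma$. *)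

theory Defs
  imports "HOL-Complex_Analysis.Complex_Analysis"
begin

definition upper_half_plane :: "complex set" where
  "upper_half_plane = {z. Im z > 0}"

definition SL2Z :: "(int^2^2) set" where
  "SL2Z = {A. det A = 1}"

definition finite_index_subgroup_SL2Z :: "(int^2^2) set \<Rightarrow> bool" where
  "finite_index_subgroup_SL2Z G \<longleftrightarrow>
     G \<subseteq> SL2Z \<and> mat 1 \<in> G \<and>
     (\<forall>A\<in>G. \<forall>B\<in>G. A ** B \<in> G) \<and>
     (\<forall>A\<in>G. \<exists>B\<in>G. A ** B = mat 1 \<and> B ** A = mat 1) \<and>
     finite {(\<lambda>B. A ** B) ` G | A. A \<in> SL2Z}"

definition moeb :: "complex^2^2 \<Rightarrow> complex \<Rightarrow> complex" where
  "moeb M z = (M$1$1 * z + M$1$2) / (M$2$1 * z + M$2$2)"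

definition cmat :: "int^2^2 \<Rightarrow> complex^2^2" where
  "cmat A = (\<chi> i j. of_int (A$i$j))"

definition is_rep :: "(int^2^2) set \<Rightarrow> (int^2^2 \<Rightarrow> complex^2^2) \<Rightarrow> bool" where
  "is_rep G \<rho> \<longleftrightarrow> (\<forall>A\<in>G. invertible (\<rho> A)) \<and> (\<forall>A\<in>G. \<forall>B\<in>G. \<rho> (A ** B) = \<rho> A ** \<rho> B)"

definition triangular_rep :: "(int^2^2) set \<Rightarrow> (int^2^2 \<Rightarrow> complex^2^2) \<Rightarrow> bool" where
  "triangular_rep G \<rho> \<longleftrightarrow> is_rep G \<rho> \<and> (\<forall>A\<in>G. \<rho> A $2$1 = 0)"

definition is_character :: "(int^2^2) set \<Rightarrow> (int^2^2 \<Rightarrow> complex) \<Rightarrow> bool" where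
  "is_character G chi \<longleftrightarrow> (\<forall>A\<in>G. chi A \<noteq> 0) \<and> (\<forall>A\<in>G. \<forall>B\<in>G. chi (A ** B) = chi A * chi B)"

text \<open>rho-equivariance of a meromorphic function; identities between meromorphic functions
  are required away from a discrete subset of H (values at poles are immaterial).\<close>
definition rho_equivariant :: "(int^2^2) set \<Rightarrow> (int^2^2 \<Rightarrow> complex^2^2) \<Rightarrow> (complex \<Rightarrow> complex) \<Rightarrow> bool" where
  "rho_equivariant G \<rho> h \<longleftrightarrow>
     (\<forall>\<gamma>\<in>G. \<forall>\<^sub>\<approx>\<tau>\<in>upper_half_plane. h (moeb (cmat \<gamma>) \<tau>) = moeb (\<rho> \<gamma>) (h \<tau>))"

definition mero_modform2_char :: "(int^2^2) set \<Rightarrow> (int^2^2 \<Rightarrow> complex) \<Rightarrow> (complex \<Rightarrow> complex) \<Rightarrow> bool" where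
  "mero_modform2_char G chi g \<longleftrightarrow> g meromorphic_on upper_half_plane \<and>
     (\<forall>\<gamma>\<in>G. \<forall>\<^sub>\<approx>\<tau>\<in>upper_half_plane.
        g (moeb (cmat \<gamma>) \<tau>) = chi \<gamma> * (of_int (\<gamma>$2$1) * \<tau> + of_int (\<gamma>$2$2))^2 * g \<tau>)"

end

theory Submission
  imports Defs
begin

lemma mob_den_nz:
  fixes a b c d :: int and z :: complex
  assumes "a*d - b*c = 1" "Im z > 0"
  shows "of_int c * z + of_int d \<noteq> 0"
proof (cases "c = 0")
  case True
  then have "d \<noteq> 0" using assms(1) by auto
  then show ?thesis using True by simp
next
  case False
  have "Im (of_int c * z + of_int d) = of_int c * Im z" by simp
  also have "\<dots> \<noteq> 0" using False assms(2) by simp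
  finally show ?thesis by (metis zero_complex.sel(2))
qed

lemma mob_Im:
  fixes a b c d :: int and z :: complex
  assumes "a*d - b*c = 1" "Im z > 0"
  shows "Im ((of_int a * z + of_int b) / (of_int c * z + of_int d)) > 0"
proof -
  have nz: "of_int c * z + of_int d \<noteq> 0" using mob_den_nz[OF assms] .
  have num: "Im (of_int a * z + of_int b) * Re (of_int c * z + of_int d) -
        Re (of_int a * z + of_int b) * Im (of_int c * z + of_int d) = real_of_int (a*d - b*c) * Im z"
    by (simp add: algebra_simps)
  have den: "(Re (of_int c * z + of_int d))\<^sup>2 + (Im (of_int c * z + of_int d))\<^sup>2 > 0"
    using nz by (metis complex_eq_0 add_nonneg_nonneg zero_le_power2 order_le_neq_trans complex_eq_iff)
  show ?thesis unfolding Im_divide num using assms den by simp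
qed

lemma mob_inj:
  fixes a b c d :: int and z w :: complex
  assumes "a*d - b*c = 1" "Im z > 0" "Im w > 0"
    and "(of_int a * z + of_int b) / (of_int c * z + of_int d) = (of_int a * w + of_int b) / (of_int c * w + of_int d)"
  shows "z = w"
proof -
  have nz: "of_int c * z + of_int d \<noteq> 0" "of_int c * w + of_int d \<noteq> 0"
    using mob_den_nz assms by auto
  from assms(4) have "(of_int a * z + of_int b) * (of_int c * w + of_int d) = (of_int a * w + of_int b) * (of_int c * z + of_int d)"
    using nz by (simp add: field_simps)
  then have "of_int (a*d - b*c) * (z - w) = (0::complex)" by (simp add: algebra_simps)
  then show ?thesis using assms(1) by simp
qed

lemma mob_deriv:
  fixes a b c d :: int and z :: complex
  assumes "a*d - b*c = 1" "Im z > 0"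
  shows "((\<lambda>z. (of_int a * z + of_int b) / (of_int c * z + of_int d)) has_field_derivative
          1 / (of_int c * z + of_int d)^2) (at z)"
proof -
  have nz: "of_int c * z + of_int d \<noteq> 0" using mob_den_nz[OF assms] .
  have "((\<lambda>z. (of_int a * z + of_int b) / (of_int c * z + of_int d)) has_field_derivative
     ((of_int a * (of_int c * z + of_int d) - (of_int a * z + of_int b) * of_int c) / (of_int c * z + of_int d)^2)) (at z)"
    using nz by (auto intro!: derivative_eq_intros simp: power2_eq_square)
  also have "(of_int a * (of_int c * z + of_int d) - (of_int a * z + of_int b) * of_int c) = (of_int (a*d-b*c) :: complex)"
    by (simp add: algebra_simps)
  finally show ?thesis using assms(1) by simp
qed

lemma SL2Z_det: "A \<in> SL2Z \<Longrightarrow> A$1$1 * A$2$2 - A$1$2 * A$2$1 = 1"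
  by (simp add: SL2Z_def det_2)

lemma moeb_cmat: "moeb (cmat A) z = (of_int (A$1$1) * z + of_int (A$1$2)) / (of_int (A$2$1) * z + of_int (A$2$2))"
  by (simp add: moeb_def cmat_def)

lemma mult_2x2: "(A ** (B::'a::semiring_1^2^2)) $ i $ j = A$i$1 * B$1$j + A$i$2 * B$2$j"
  by (simp add: matrix_matrix_mult_def sum_2)

lemma moeb_comp:
  assumes "A \<in> SL2Z" "B \<in> SL2Z" "Im z > 0"
  shows "moeb (cmat (A ** B)) z = moeb (cmat A) (moeb (cmat B) z)"
proof -
  have nz: "of_int (B$2$1) * z + of_int (B$2$2) \<noteq> 0"
    using mob_den_nz[OF SL2Z_det[OF assms(2)] assms(3)] .
  have "A ** B \<in> SL2Z" using assms by (simp add: SL2Z_def det_mul)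
  then have nz2: "of_int ((A**B)$2$1) * z + of_int ((A**B)$2$2) \<noteq> 0"
    using mob_den_nz[OF SL2Z_det assms(3)] by blast
  have nz3: "of_int (A$2$1) * (of_int (B$1$1) * z + of_int (B$1$2)) + of_int (A$2$2) * (of_int (B$2$1) * z + of_int (B$2$2)) \<noteq> 0"
    using nz2 unfolding mult_2x2 by (simp add: algebra_simps)
  have frac: "(a*(p/q)+b)/(c*(p/q)+d) = (a*p+b*q)/(c*p+d*q)" if "q \<noteq> 0" for a b c d p q :: complex
  proof -
    have "a*(p/q)+b = (a*p+b*q)/q" "c*(p/q)+d = (c*p+d*q)/q" using that by (auto simp: field_simps)
    then show ?thesis using that by simp
  qed
  show ?thesis unfolding moeb_cmat mult_2x2 frac[OF nz]
    by (simp add: algebra_simps)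
qed

lemma H_open: "open upper_half_plane"
  unfolding upper_half_plane_def by (rule open_halfspace_Im_gt)

lemma H_connected: "connected upper_half_plane"
  unfolding upper_half_plane_def by (rule connected_halfspace_Im_gt)

lemma g_H: "\<gamma> \<in> SL2Z \<Longrightarrow> z \<in> upper_half_plane \<Longrightarrow> moeb (cmat \<gamma>) z \<in> upper_half_plane"
  unfolding upper_half_plane_def moeb_cmat using mob_Im[OF SL2Z_det] by auto

lemma g_den_nz: "\<gamma> \<in> SL2Z \<Longrightarrow> z \<in> upper_half_plane \<Longrightarrow> of_int (\<gamma>$2$1) * z + of_int (\<gamma>$2$2) \<noteq> 0"
  unfolding upper_half_plane_def using mob_den_nz[OF SL2Z_det] by auto

lemma g_deriv: "\<gamma> \<in> SL2Z \<Longrightarrow> z \<in> upper_half_plane \<Longrightarrow>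
   (moeb (cmat \<gamma>) has_field_derivative 1 / (of_int (\<gamma>$2$1) * z + of_int (\<gamma>$2$2))^2) (at z)"
  unfolding upper_half_plane_def moeb_cmat[abs_def] using mob_deriv[OF SL2Z_det] by auto

lemma g_inj: "\<gamma> \<in> SL2Z \<Longrightarrow> z \<in> upper_half_plane \<Longrightarrow> w \<in> upper_half_plane \<Longrightarrow>
   moeb (cmat \<gamma>) z = moeb (cmat \<gamma>) w \<Longrightarrow> z = w"
  unfolding upper_half_plane_def moeb_cmat using mob_inj[OF SL2Z_det] by auto

lemma g_filterlim:
  assumes "\<gamma> \<in> SL2Z" "z \<in> upper_half_plane"
  shows "filterlim (moeb (cmat \<gamma>)) (at (moeb (cmat \<gamma>) z)) (at z)"
proof (rule filterlim_atI)
  show "(moeb (cmat \<gamma>) \<longlongrightarrow> moeb (cmat \<gamma>) z) (at z)"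
    using DERIV_isCont[OF g_deriv[OF assms]] by (simp add: isCont_def)
  have "eventually (\<lambda>w. w \<in> upper_half_plane - {z}) (at z)"
    using assms(2) H_open by (intro eventually_at_in_open) auto
  then show "eventually (\<lambda>w. moeb (cmat \<gamma>) w \<noteq> moeb (cmat \<gamma>) z) (at z)"
    by eventually_elim (use g_inj[OF assms(1) _ assms(2)] in blast)
qed

lemma cosparse_pre:
  assumes "\<gamma> \<in> SL2Z" "eventually P (cosparse upper_half_plane)"
  shows "eventually (\<lambda>z. P (moeb (cmat \<gamma>) z)) (cosparse upper_half_plane)"
  unfolding eventually_cosparse_open_eq[OF H_open]
proof
  fix z assume z: "z \<in> upper_half_plane"
  have "eventually P (at (moeb (cmat \<gamma>) z))"
    using assms(2) g_H[OF assms(1) z] unfolding eventually_cosparse_open_eq[OF H_open] by blast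
  then show "eventually (\<lambda>z. P (moeb (cmat \<gamma>) z)) (at z)"
    using eventually_compose_filterlim g_filterlim[OF assms(1) z] by blast
qed

lemma cosparse_H: "eventually (\<lambda>z. z \<in> upper_half_plane) (cosparse upper_half_plane)"
  using eventually_in_cosparse[OF order.refl H_open] .

lemma cosparse_analytic:
  assumes "h meromorphic_on upper_half_plane"
  shows "eventually (\<lambda>z. h analytic_on {z}) (cosparse upper_half_plane)"
  using meromorphic_on_imp_sparse_singularities[OF assms] by (simp add: eventually_cosparse)

lemma cosparse_open_conn:
  assumes "eventually P (cosparse upper_half_plane)"
  shows "open {z\<in>upper_half_plane. P z}" "connected {z\<in>upper_half_plane. P z}"
proof -
  have sp: "{z. \<not> P z} sparse_in upper_half_plane" using assms by (simp add: eventually_cosparse)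
  have eq: "{z\<in>upper_half_plane. P z} = upper_half_plane - {z. \<not> P z}" by auto
  show "open {z\<in>upper_half_plane. P z}" unfolding eq by (rule open_diff_sparse_pts[OF H_open sp])
  show "connected {z\<in>upper_half_plane. P z}" unfolding eq
    by (rule sparse_imp_connected[OF _ H_connected H_open sp]) simp
qed

lemma analytic_deriv_at: "h analytic_on {z} \<Longrightarrow> (h has_field_derivative deriv h z) (at z)"
  using analytic_on_imp_differentiable_at DERIV_deriv_iff_field_differentiable by blast

lemma fwd_core:
  assumes g: "\<gamma> \<in> SL2Z" and mero: "h meromorphic_on upper_half_plane" and r: "r \<noteq> 0"
    and ev: "eventually (\<lambda>\<tau>. h (moeb (cmat \<gamma>) \<tau>) = (p * h \<tau> + q) / r) (cosparse upper_half_plane)"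
  shows "eventually (\<lambda>\<tau>. deriv h (moeb (cmat \<gamma>) \<tau>) =
     (p / r) * (of_int (\<gamma>$2$1) * \<tau> + of_int (\<gamma>$2$2))^2 * deriv h \<tau>) (cosparse upper_half_plane)"
proof -
  define P where "P = (\<lambda>\<tau>. \<tau> \<in> upper_half_plane \<and> h analytic_on {\<tau>} \<and> h analytic_on {moeb (cmat \<gamma>) \<tau>}
     \<and> h (moeb (cmat \<gamma>) \<tau>) = (p * h \<tau> + q) / r)"
  have evP: "eventually P (cosparse upper_half_plane)"
    using cosparse_H cosparse_analytic[OF mero] cosparse_pre[OF g cosparse_analytic[OF mero]] ev
    by eventually_elim (simp add: P_def)
  define W where "W = {z\<in>upper_half_plane. P z}"
  have W: "open W" unfolding W_def using cosparse_open_conn[OF evP] by blast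
  show ?thesis using evP
  proof (rule eventually_mono)
    fix \<tau> assume P\<tau>: "P \<tau>"
    then have \<tau>W: "\<tau> \<in> W" and H: "\<tau> \<in> upper_half_plane" unfolding W_def P_def by auto
    have nz: "of_int (\<gamma>$2$1) * \<tau> + of_int (\<gamma>$2$2) \<noteq> 0" using g_den_nz[OF g H] .
    have d1: "((\<lambda>z. h (moeb (cmat \<gamma>) z)) has_field_derivative
       deriv h (moeb (cmat \<gamma>) \<tau>) * (1 / (of_int (\<gamma>$2$1) * \<tau> + of_int (\<gamma>$2$2))^2)) (at \<tau>)"
      using DERIV_chain'[OF g_deriv[OF g H] analytic_deriv_at] P\<tau> unfolding P_def by blast
    have d2: "((\<lambda>z. (p * h z + q) / r) has_field_derivative p * deriv h \<tau> / r) (at \<tau>)"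
      using analytic_deriv_at[of h \<tau>] P\<tau> r unfolding P_def by (auto intro!: derivative_eq_intros)
    have d3: "((\<lambda>z. h (moeb (cmat \<gamma>) z)) has_field_derivative p * deriv h \<tau> / r) (at \<tau>)"
      by (rule has_field_derivative_transform_within_open[OF d2 W \<tau>W]) (auto simp: W_def P_def)
    have "deriv h (moeb (cmat \<gamma>) \<tau>) * (1 / (of_int (\<gamma>$2$1) * \<tau> + of_int (\<gamma>$2$2))^2) = p * deriv h \<tau> / r"
      using DERIV_unique[OF d1 d3] .
    then show "deriv h (moeb (cmat \<gamma>) \<tau>) =
     (p / r) * (of_int (\<gamma>$2$1) * \<tau> + of_int (\<gamma>$2$2))^2 * deriv h \<tau>"
      using nz r by (simp add: field_simps)
  qed
qed

lemma bwd_core: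
  assumes g: "\<gamma> \<in> SL2Z" and mero: "h meromorphic_on upper_half_plane"
    and ev: "eventually (\<lambda>\<tau>. deriv h (moeb (cmat \<gamma>) \<tau>) =
     x * (of_int (\<gamma>$2$1) * \<tau> + of_int (\<gamma>$2$2))^2 * deriv h \<tau>) (cosparse upper_half_plane)"
  shows "\<exists>c. eventually (\<lambda>\<tau>. h (moeb (cmat \<gamma>) \<tau>) = x * h \<tau> + c) (cosparse upper_half_plane)"
proof -
  define P where "P = (\<lambda>\<tau>. \<tau> \<in> upper_half_plane \<and> h analytic_on {\<tau>} \<and> h analytic_on {moeb (cmat \<gamma>) \<tau>}
     \<and> deriv h (moeb (cmat \<gamma>) \<tau>) = x * (of_int (\<gamma>$2$1) * \<tau> + of_int (\<gamma>$2$2))^2 * deriv h \<tau>)"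
  have evP: "eventually P (cosparse upper_half_plane)"
    using cosparse_H cosparse_analytic[OF mero] cosparse_pre[OF g cosparse_analytic[OF mero]] ev
    by eventually_elim (simp add: P_def)
  define W where "W = {z\<in>upper_half_plane. P z}"
  have W: "open W" "connected W" unfolding W_def using cosparse_open_conn[OF evP] by blast+
  have "(\<lambda>z. h (moeb (cmat \<gamma>) z) - x * h z) constant_on W"
  proof (rule has_field_derivative_0_imp_constant_on[OF _ W(2,1)])
    fix \<tau> assume "\<tau> \<in> W"
    then have P\<tau>: "P \<tau>" and H: "\<tau> \<in> upper_half_plane" unfolding W_def by auto
    have nz: "of_int (\<gamma>$2$1) * \<tau> + of_int (\<gamma>$2$2) \<noteq> 0" using g_den_nz[OF g H] .
    have d1: "((\<lambda>z. h (moeb (cmat \<gamma>) z)) has_field_derivative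
       deriv h (moeb (cmat \<gamma>) \<tau>) * (1 / (of_int (\<gamma>$2$1) * \<tau> + of_int (\<gamma>$2$2))^2)) (at \<tau>)"
      using DERIV_chain'[OF g_deriv[OF g H] analytic_deriv_at] P\<tau> unfolding P_def by blast
    have d2: "(h has_field_derivative deriv h \<tau>) (at \<tau>)"
      using analytic_deriv_at[of h \<tau>] P\<tau> unfolding P_def by auto
    have "((\<lambda>z. h (moeb (cmat \<gamma>) z) - x * h z) has_field_derivative
       deriv h (moeb (cmat \<gamma>) \<tau>) * (1 / (of_int (\<gamma>$2$1) * \<tau> + of_int (\<gamma>$2$2))^2) - x * deriv h \<tau>) (at \<tau>)"
      by (intro DERIV_diff d1 DERIV_cmult d2)
    also have "deriv h (moeb (cmat \<gamma>) \<tau>) * (1 / (of_int (\<gamma>$2$1) * \<tau> + of_int (\<gamma>$2$2))^2) - x * deriv h \<tau> = 0"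
      using P\<tau> nz unfolding P_def by (simp add: field_simps)
    finally show "((\<lambda>z. h (moeb (cmat \<gamma>) z) - x * h z) has_field_derivative 0) (at \<tau>)" .
  qed
  then obtain c where c: "\<And>z. z \<in> W \<Longrightarrow> h (moeb (cmat \<gamma>) z) - x * h z = c"
    unfolding constant_on_def by blast
  have "eventually (\<lambda>\<tau>. h (moeb (cmat \<gamma>) \<tau>) = x * h \<tau> + c) (cosparse upper_half_plane)"
    using evP by (rule eventually_mono) (use c in \<open>force simp: W_def P_def\<close>)
  then show ?thesis by blast
qed

lemma H_ne: "cosparse upper_half_plane \<noteq> bot"
proof -
  have "\<i> \<in> upper_half_plane" by (simp add: upper_half_plane_def)
  then show ?thesis by (subst cosparse_eq_bot_iff') auto
qed

theorem theorem4p3: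
  fixes h :: "complex \<Rightarrow> complex" and G :: "(int^2^2) set"
  assumes "h meromorphic_on upper_half_plane"
    and "finite_index_subgroup_SL2Z G"
  shows "(\<exists>\<rho>. triangular_rep G \<rho> \<and> rho_equivariant G \<rho> h) \<longleftrightarrow>
         (\<exists>chi. is_character G chi \<and> mero_modform2_char G chi (deriv h))"
proof -
  have mero: "h meromorphic_on upper_half_plane" by fact
  have GS: "G \<subseteq> SL2Z" and Gmul: "\<And>A B. A \<in> G \<Longrightarrow> B \<in> G \<Longrightarrow> A ** B \<in> G"
    using assms(2) unfolding finite_index_subgroup_SL2Z_def by auto
  show ?thesis
  proof
    assume "\<exists>\<rho>. triangular_rep G \<rho> \<and> rho_equivariant G \<rho> h"
    then obtain \<rho> where tr: "triangular_rep G \<rho>" and eq: "rho_equivariant G \<rho> h" by blast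
    have inv: "\<And>A. A \<in> G \<Longrightarrow> invertible (\<rho> A)" and hom: "\<And>A B. A \<in> G \<Longrightarrow> B \<in> G \<Longrightarrow> \<rho> (A ** B) = \<rho> A ** \<rho> B"
      and low: "\<And>A. A \<in> G \<Longrightarrow> \<rho> A $2$1 = 0"
      using tr unfolding triangular_rep_def is_rep_def by auto
    have nz: "\<rho> A $1$1 \<noteq> 0 \<and> \<rho> A $2$2 \<noteq> 0" if "A \<in> G" for A
    proof -
      have "det (\<rho> A) \<noteq> 0" using inv[OF that] invertible_det_nz by blast
      then show ?thesis using low[OF that] by (simp add: det_2)
    qed
    define chi where "chi = (\<lambda>A. \<rho> A $1$1 / \<rho> A $2$2)"
    have "is_character G chi"
      unfolding is_character_def
    proof (intro conjI ballI)
      fix A assume "A \<in> G" then show "chi A \<noteq> 0" using nz unfolding chi_def by auto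
    next
      fix A B assume A: "A \<in> G" and B: "B \<in> G"
      show "chi (A ** B) = chi A * chi B"
        unfolding chi_def hom[OF A B] mult_2x2 using low[OF A] low[OF B] by simp
    qed
    moreover have "mero_modform2_char G chi (deriv h)"
      unfolding mero_modform2_char_def
    proof (intro conjI ballI)
      show "deriv h meromorphic_on upper_half_plane" using meromorphic_on_deriv[OF mero] .
    next
      fix \<gamma> assume g: "\<gamma> \<in> G"
      have ev: "eventually (\<lambda>\<tau>. h (moeb (cmat \<gamma>) \<tau>) = (\<rho> \<gamma> $1$1 * h \<tau> + \<rho> \<gamma> $1$2) / \<rho> \<gamma> $2$2) (cosparse upper_half_plane)"
      proof -
        have "eventually (\<lambda>\<tau>. h (moeb (cmat \<gamma>) \<tau>) = moeb (\<rho> \<gamma>) (h \<tau>)) (cosparse upper_half_plane)"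
          using eq g unfolding rho_equivariant_def by blast
        then show ?thesis by (simp add: moeb_def low[OF g])
      qed
      show "\<forall>\<^sub>\<approx>\<tau>\<in>upper_half_plane. deriv h (moeb (cmat \<gamma>) \<tau>) =
          chi \<gamma> * (of_int (\<gamma>$2$1) * \<tau> + of_int (\<gamma>$2$2))^2 * deriv h \<tau>"
        unfolding chi_def using fwd_core[OF _ mero _ ev] g GS nz by blast
    qed
    ultimately show "\<exists>chi. is_character G chi \<and> mero_modform2_char G chi (deriv h)" by blast
  next
    assume "\<exists>chi. is_character G chi \<and> mero_modform2_char G chi (deriv h)"
    then obtain chi where ch: "is_character G chi" and mf: "mero_modform2_char G chi (deriv h)" by blast
    have chnz: "\<And>A. A \<in> G \<Longrightarrow> chi A \<noteq> 0" and chmul: "\<And>A B. A \<in> G \<Longrightarrow> B \<in> G \<Longrightarrow> chi (A ** B) = chi A * chi B"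
      using ch unfolding is_character_def by auto
    have "\<forall>\<gamma>\<in>G. \<exists>c. eventually (\<lambda>\<tau>. h (moeb (cmat \<gamma>) \<tau>) = chi \<gamma> * h \<tau> + c) (cosparse upper_half_plane)"
    proof
      fix \<gamma> assume g: "\<gamma> \<in> G"
      show "\<exists>c. eventually (\<lambda>\<tau>. h (moeb (cmat \<gamma>) \<tau>) = chi \<gamma> * h \<tau> + c) (cosparse upper_half_plane)"
        using bwd_core[of \<gamma> h "chi \<gamma>"] g GS mero mf unfolding mero_modform2_char_def by blast
    qed
    then obtain \<beta> where \<beta>: "\<And>\<gamma>. \<gamma> \<in> G \<Longrightarrow> eventually (\<lambda>\<tau>. h (moeb (cmat \<gamma>) \<tau>) = chi \<gamma> * h \<tau> + \<beta> \<gamma>) (cosparse upper_half_plane)"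
      by (metis bchoice)
    define \<rho> where "\<rho> = (\<lambda>A. vector [vector [chi A, \<beta> A], vector [0, 1]] :: complex^2^2)"
    have \<rho>c: "\<rho> A $1$1 = chi A" "\<rho> A $1$2 = \<beta> A" "\<rho> A $2$1 = 0" "\<rho> A $2$2 = 1" for A
      unfolding \<rho>_def by simp_all
    have cocyc: "\<beta> (A ** B) = chi A * \<beta> B + \<beta> A" if A: "A \<in> G" and B: "B \<in> G" for A B
    proof -
      have AS: "A \<in> SL2Z" and BS: "B \<in> SL2Z" using A B GS by auto
      have "eventually (\<lambda>\<tau>. \<tau> \<in> upper_half_plane \<and>
          h (moeb (cmat (A ** B)) \<tau>) = chi (A ** B) * h \<tau> + \<beta> (A ** B) \<and>
          h (moeb (cmat A) (moeb (cmat B) \<tau>)) = chi A * h (moeb (cmat B) \<tau>) + \<beta> A \<and>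
          h (moeb (cmat B) \<tau>) = chi B * h \<tau> + \<beta> B) (cosparse upper_half_plane)"
        using cosparse_H \<beta>[OF Gmul[OF A B]] cosparse_pre[OF BS \<beta>[OF A]] \<beta>[OF B]
        by eventually_elim auto
      then obtain \<tau> where \<tau>: "\<tau> \<in> upper_half_plane"
          "h (moeb (cmat (A ** B)) \<tau>) = chi (A ** B) * h \<tau> + \<beta> (A ** B)"
          "h (moeb (cmat A) (moeb (cmat B) \<tau>)) = chi A * h (moeb (cmat B) \<tau>) + \<beta> A"
          "h (moeb (cmat B) \<tau>) = chi B * h \<tau> + \<beta> B"
        using eventually_happens[of _ "cosparse upper_half_plane"] H_ne by blast
      have "moeb (cmat (A ** B)) \<tau> = moeb (cmat A) (moeb (cmat B) \<tau>)"
        using moeb_comp[OF AS BS] \<tau>(1) by (simp add: upper_half_plane_def)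
      then have "chi (A ** B) * h \<tau> + \<beta> (A ** B) = chi A * (chi B * h \<tau> + \<beta> B) + \<beta> A"
        using \<tau> by simp
      then show ?thesis using chmul[OF A B] by (simp add: algebra_simps)
    qed
    have "triangular_rep G \<rho>"
      unfolding triangular_rep_def is_rep_def
    proof (intro conjI ballI)
      fix A assume A: "A \<in> G"
      show "invertible (\<rho> A)" unfolding invertible_det_nz det_2 \<rho>c using chnz[OF A] by simp
      show "\<rho> A $2$1 = 0" by (rule \<rho>c)
    next
      fix A B assume A: "A \<in> G" and B: "B \<in> G"
      show "\<rho> (A ** B) = \<rho> A ** \<rho> B"
        unfolding vec_eq_iff forall_2 mult_2x2 \<rho>c using chmul[OF A B] cocyc[OF A B] by simp
    qed
    moreover have "rho_equivariant G \<rho> h"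
      unfolding rho_equivariant_def
    proof
      fix \<gamma> assume g: "\<gamma> \<in> G"
      show "\<forall>\<^sub>\<approx>\<tau>\<in>upper_half_plane. h (moeb (cmat \<gamma>) \<tau>) = moeb (\<rho> \<gamma>) (h \<tau>)"
        using \<beta>[OF g] by (simp add: moeb_def \<rho>c)
    qed
    ultimately show "\<exists>\<rho>. triangular_rep G \<rho> \<and> rho_equivariant G \<rho> h" by blast
  qed
qed

end
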